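(* Let $S$ be a rectangular band semigroup and let $\omega$ be a separable weight on $S$. Then $\ell^{1}(S,\omega)$ is pseudo-amenable if and only if $S$ is a singleton.
   Context: A rectangular band semigroup is a semigroup $S$ with $s^2=s$ and $sts=s$ for all $s,t\in S$; every such $S$ is isomorphic to $L\times R$ where $L$ is a left zero semigroup ($st=s$ for all $s,t$) and $R$ is a right zero semigroup ($st=t$ for all $s,t$). A weight on a semigroup is a function $\omega$ into $(0,\infty)$ with $\omega(st)\le\omega(s)\omega(t)$; a weight $\omega$ on $S\cong L\times R$ is separable if there are weights $\omega_L$ on $L$ and $\omega_R$ on $R$ with $\omega(l,r)=\omega_L(l)\omega_R(r)$. The Beurling algebra $\ell^{1}(S,\omega)$ is the space of $f=\sum_s f(s)\delta_s$ with $\sum_s|f(s)|\omega(s)<\infty$, with convolution $\delta_s*\delta_t=\delta_{st}$. For a Banach algebra $\mathcal{A}$, let $\pi:\mathcal{A}\hat{\otimes}\mathcal{A}\to\mathcal{A}$, $\pi(a\otimes b)=ab$, with the bimodule structure $c\cdot(a\otimes b)=ca\otimes b$, $(a\otimes b)\cdot c=a\otimes bc$. An approximate diagonal is a net $(m_i)$ in $\mathcal{A}\hat{\otimes}\mathcal{A}$ with $a\cdot m_i-m_i\cdot a\to0$ and $a\pi(m_i)\to a$ for all $a\in\mathcal{A}$; $\mathcal{A}$ is pseudo-amenable if it has an approximate diagonal. *)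

theory Defs
  imports "HOL-Analysis.Analysis"
begin

definition rectangular_band :: "('a::semigroup_mult) itself \<Rightarrow> bool" where
  "rectangular_band (_ :: 'a itself) \<longleftrightarrow>
     (\<forall>s::'a. s * s = s) \<and> (\<forall>s t::'a. s * t * s = s)"

definition is_weight :: "('a::semigroup_mult \<Rightarrow> real) \<Rightarrow> bool" where
  "is_weight w \<longleftrightarrow> (\<forall>s. 0 < w s) \<and> (\<forall>s t. w (s * t) \<le> w s * w t)"

text \<open>Separable weight: there is an isomorphism phi of S onto L x R, where L (a set)
  carries the left zero product (l m = l) and R the right zero product (r q = q),
  together with weights wL on L and wR on R such that w = (wL x wR) o phi.
  Since L and R have cardinality at most that of S, they may be taken as subsets
  of the carrier type of S without loss of generality.\<close>
definition separable_weight :: "('a::semigroup_mult \<Rightarrow> real) \<Rightarrow> bool" where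
  "separable_weight w \<longleftrightarrow>
     (\<exists>(L::'a set) (R::'a set) (phi::'a \<Rightarrow> 'a \<times> 'a) (wL::'a \<Rightarrow> real) (wR::'a \<Rightarrow> real).
        bij_betw phi UNIV (L \<times> R) \<and>
        (\<forall>s t. phi (s * t) = (fst (phi s), snd (phi t))) \<and>
        (\<forall>l\<in>L. 0 < wL l) \<and> (\<forall>l\<in>L. \<forall>m\<in>L. wL l \<le> wL l * wL m) \<and>
        (\<forall>r\<in>R. 0 < wR r) \<and> (\<forall>r\<in>R. \<forall>q\<in>R. wR q \<le> wR r * wR q) \<and>
        (\<forall>s. w s = wL (fst (phi s)) * wR (snd (phi s))))"

definition l1_space :: "('b \<Rightarrow> real) \<Rightarrow> ('b \<Rightarrow> complex) set" where
  "l1_space w = {f. (\<lambda>s. norm (f s) * w s) summable_on UNIV}"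

definition l1_norm :: "('b \<Rightarrow> real) \<Rightarrow> ('b \<Rightarrow> complex) \<Rightarrow> real" where
  "l1_norm w f = (\<Sum>\<^sub>\<infinity>s. norm (f s) * w s)"

definition bconv :: "('a::semigroup_mult \<Rightarrow> complex) \<Rightarrow> ('a \<Rightarrow> complex) \<Rightarrow> 'a \<Rightarrow> complex" where
  "bconv f g u = (\<Sum>\<^sub>\<infinity>(s,t)\<in>{(s,t). s * t = u}. f s * g t)"

text \<open>The projective tensor product l1(S,w) (x) l1(S,w) is identified (isometrically)
  with l1(S x S, w x w), a (x) b corresponding to (x,y) |-> a x * b y.\<close>
definition tensor_weight :: "('a \<Rightarrow> real) \<Rightarrow> 'a \<times> 'a \<Rightarrow> real" where
  "tensor_weight w = (\<lambda>(x,y). w x * w y)"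

text \<open>Left module action c.(a (x) b) = ca (x) b.\<close>
definition blmod :: "('a::semigroup_mult \<Rightarrow> complex) \<Rightarrow> ('a \<times> 'a \<Rightarrow> complex) \<Rightarrow> 'a \<times> 'a \<Rightarrow> complex" where
  "blmod c m = (\<lambda>(u,v). \<Sum>\<^sub>\<infinity>(s,x)\<in>{(s,x). s * x = u}. c s * m (x,v))"

text \<open>Right module action (a (x) b).c = a (x) bc.\<close>
definition brmod :: "('a::semigroup_mult \<times> 'a \<Rightarrow> complex) \<Rightarrow> ('a \<Rightarrow> complex) \<Rightarrow> 'a \<times> 'a \<Rightarrow> complex" where
  "brmod m c = (\<lambda>(u,v). \<Sum>\<^sub>\<infinity>(y,t)\<in>{(y,t). y * t = v}. m (u,y) * c t)"

text \<open>The product map pi(a (x) b) = ab.\<close>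
definition bpi :: "('a::semigroup_mult \<times> 'a \<Rightarrow> complex) \<Rightarrow> 'a \<Rightarrow> complex" where
  "bpi m u = (\<Sum>\<^sub>\<infinity>(x,y)\<in>{(x,y). x * y = u}. m (x,y))"

text \<open>Approximate diagonal, for a net m indexed by a (directed set, encoded as a) filter F.\<close>
definition approx_diagonal :: "('a::semigroup_mult \<Rightarrow> real) \<Rightarrow> 'i filter \<Rightarrow> ('i \<Rightarrow> 'a \<times> 'a \<Rightarrow> complex) \<Rightarrow> bool" where
  "approx_diagonal w F m \<longleftrightarrow>
     F \<noteq> bot \<and>
     (\<forall>\<^sub>F i in F. m i \<in> l1_space (tensor_weight w)) \<and>
     (\<forall>a\<in>l1_space w.
        ((\<lambda>i. l1_norm (tensor_weight w) (blmod a (m i) - brmod (m i) a)) \<longlongrightarrow> 0) F \<and>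
        ((\<lambda>i. l1_norm w (bconv a (bpi (m i)) - a)) \<longlongrightarrow> 0) F)"

text \<open>Pseudo-amenability: existence of an approximate diagonal (a net in the tensor
  product; every net is equivalent to a filter on the tensor product itself).\<close>
definition pseudo_amenable_beurling :: "('a::semigroup_mult \<Rightarrow> real) \<Rightarrow> bool" where
  "pseudo_amenable_beurling w \<longleftrightarrow>
     (\<exists>F :: ('a \<times> 'a \<Rightarrow> complex) filter. approx_diagonal w F (\<lambda>m. m))"

end

theory Submission
  imports Defs
begin

lemma fiber_bij: "bij_betw (\<lambda>b. (f b, b)) UNIV (Sigma UNIV (\<lambda>c. {b. f b = c}))"
  by (auto simp: bij_betw_def inj_on_def image_def)

lemma fiber_sum:
  fixes g :: "'b \<Rightarrow> 'v::banach" and f :: "'b \<Rightarrow> 'c"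
  assumes "g summable_on UNIV"
  shows "(\<lambda>c. infsum g {b. f b = c}) summable_on UNIV"
    and "infsum (\<lambda>c. infsum g {b. f b = c}) UNIV = infsum g UNIV"
proof -
  have S: "(\<lambda>(c,b). g b) summable_on Sigma UNIV (\<lambda>c. {b. f b = c})"
    using summable_on_reindex_bij_betw[OF fiber_bij[of f], of "\<lambda>(c,b). g b"] assms by simp
  have S': "(\<lambda>(c,b). (\<lambda>c b. g b) c b) summable_on Sigma UNIV (\<lambda>c. {b. f b = c})"
    using S by simp
  show "(\<lambda>c. infsum g {b. f b = c}) summable_on UNIV"
    using summable_on_Sigma_banach[OF S'] by simp
  have "infsum (\<lambda>c. infsum g {b. f b = c}) UNIV = infsum (\<lambda>(c,b). g b) (Sigma UNIV (\<lambda>c. {b. f b = c}))"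
    using infsum_Sigma'_banach[OF S'] by simp
  also have "\<dots> = infsum g UNIV"
    using infsum_reindex_bij_betw[OF fiber_bij[of f], of "\<lambda>(c,b). g b"] by simp
  finally show "infsum (\<lambda>c. infsum g {b. f b = c}) UNIV = infsum g UNIV" .
qed

lemma fiber_weighted:
  fixes h :: "'b \<Rightarrow> complex" and f :: "'b \<Rightarrow> 'c" and W :: "'c \<Rightarrow> real"
  assumes W: "\<And>c. 0 \<le> W c"
    and S: "(\<lambda>b. norm (h b) * W (f b)) summable_on UNIV"
  shows "(\<lambda>c. norm (infsum h {b. f b = c}) * W c) summable_on UNIV"
proof (rule summable_on_comparison_test)
  show "(\<lambda>c. infsum (\<lambda>b. norm (h b) * W (f b)) {b. f b = c}) summable_on UNIV"
    by (rule fiber_sum(1)[OF S])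
  fix c
  show "0 \<le> norm (infsum h {b. f b = c}) * W c" using W by simp
  show "norm (infsum h {b. f b = c}) * W c \<le> infsum (\<lambda>b. norm (h b) * W (f b)) {b. f b = c}"
  proof (cases "W c = 0")
    case True
    then show ?thesis using W by (simp add: infsum_nonneg)
  next
    case False
    then have Wp: "W c > 0" using W[of c] by simp
    have S1: "(\<lambda>b. norm (h b) * W (f b)) summable_on {b. f b = c}"
      using summable_on_subset_banach[OF S] by blast
    have S2: "(\<lambda>b. norm (h b) * W (f b) * (1 / W c)) summable_on {b. f b = c}"
      using summable_on_cmult_left[OF S1, of "1 / W c"] by (simp add: mult.commute)
    have S3: "(\<lambda>b. norm (h b)) summable_on {b. f b = c}"
      using S2 by (rule summable_on_cong[THEN iffD1, rotated]) (use Wp in auto)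
    have "norm (infsum h {b. f b = c}) \<le> infsum (\<lambda>b. norm (h b)) {b. f b = c}"
      by (rule norm_infsum_bound) (use S3 in simp)
    then have "norm (infsum h {b. f b = c}) * W c \<le> infsum (\<lambda>b. norm (h b)) {b. f b = c} * W c"
      using W by (simp add: mult_right_mono)
    also have "\<dots> = infsum (\<lambda>b. norm (h b) * W c) {b. f b = c}"
      by (simp add: infsum_cmult_left')
    also have "\<dots> = infsum (\<lambda>b. norm (h b) * W (f b)) {b. f b = c}"
      by (rule infsum_cong) auto
    finally show ?thesis .
  qed
qed

lemma sub_reindex:
  fixes k :: "'b \<Rightarrow> real" and e :: "'c \<Rightarrow> 'b"
  assumes "inj e" "k summable_on UNIV" "\<And>b. 0 \<le> k b"
  shows "(\<lambda>c. k (e c)) summable_on UNIV" "infsum (\<lambda>c. k (e c)) UNIV \<le> infsum k UNIV"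
proof -
  have S: "k summable_on range e" using summable_on_subset_banach[OF assms(2)] by blast
  then show "(\<lambda>c. k (e c)) summable_on UNIV"
    using summable_on_reindex[OF assms(1), of k] by (simp add: o_def)
  have "infsum (\<lambda>c. k (e c)) UNIV = infsum k (range e)"
    using infsum_reindex[OF assms(1), of k] by (simp add: o_def)
  also have "\<dots> \<le> infsum k UNIV"
    by (rule infsum_mono2[OF S assms(2)]) (use assms(3) in auto)
  finally show "infsum (\<lambda>c. k (e c)) UNIV \<le> infsum k UNIV" .
qed

lemma point_le_l1:
  fixes g :: "'b \<Rightarrow> complex"
  assumes "(\<lambda>u. norm (g u) * W u) summable_on UNIV" "\<And>u. 0 \<le> W u"
  shows "norm (g u) * W u \<le> l1_norm W g"
proof -
  have "sum (\<lambda>u. norm (g u) * W u) {u} \<le> infsum (\<lambda>u. norm (g u) * W u) UNIV"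
    by (rule finite_sum_le_infsum) (use assms in auto)
  then show ?thesis by (simp add: l1_norm_def)
qed


definition dl :: "'a \<Rightarrow> 'a \<Rightarrow> complex" where "dl s = (\<lambda>u. if u = s then 1 else 0)"

lemma dl_weighted: "(\<lambda>u. norm (dl s u) * W u) summable_on UNIV"
  by (rule finite_nonzero_values_imp_summable_on) (auto simp: dl_def intro: finite_subset[of _ "{s}"])

lemma bconv_dl: "bconv (dl s) g u = infsum g {t. s * t = u}"
proof -
  have "bconv (dl s) g u = infsum (\<lambda>(a,t). dl s a * g t) ((\<lambda>t. (s,t)) ` {t. s * t = u})"
    unfolding bconv_def by (rule infsum_cong_neutral) (auto simp: dl_def)
  also have "\<dots> = infsum g {t. s * t = u}"
    by (subst infsum_reindex) (auto simp: inj_on_def o_def dl_def)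
  finally show ?thesis .
qed

lemma blmod_dl: "blmod (dl s) m (u,v) = infsum (\<lambda>x. m (x,v)) {x. s * x = u}"
proof -
  have "blmod (dl s) m (u,v) = infsum (\<lambda>(a,x). dl s a * m (x,v)) ((\<lambda>x. (s,x)) ` {x. s * x = u})"
    unfolding blmod_def by simp (rule infsum_cong_neutral, auto simp: dl_def)
  also have "\<dots> = infsum (\<lambda>x. m (x,v)) {x. s * x = u}"
    by (subst infsum_reindex) (auto simp: inj_on_def o_def dl_def)
  finally show ?thesis .
qed

lemma brmod_dl: "brmod m (dl s) (u,v) = infsum (\<lambda>y. m (u,y)) {y. y * s = v}"
proof -
  have "brmod m (dl s) (u,v) = infsum (\<lambda>(y,t). m (u,y) * dl s t) ((\<lambda>y. (y,s)) ` {y. y * s = v})"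
    unfolding brmod_def by simp (rule infsum_cong_neutral, auto simp: dl_def)
  also have "\<dots> = infsum (\<lambda>y. m (u,y)) {y. y * s = v}"
    by (subst infsum_reindex) (auto simp: inj_on_def o_def dl_def)
  finally show ?thesis .
qed

lemma bpi_alt: "bpi m u = infsum m {p. (\<lambda>(x,y). x * y) p = u}"
  unfolding bpi_def by (simp add: case_prod_eta) (metis (no_types, lifting) Collect_cong case_prod_beta prod.collapse split_beta)


lemma tw_ge1: assumes "\<And>s. 1 \<le> w s" shows "1 \<le> tensor_weight w p"
  using assms[of "fst p"] assms[of "snd p"] by (cases p) (simp add: tensor_weight_def, metis mult_mono' mult_1 zero_le_one)

lemma bpi_summable:
  fixes m :: "'a::semigroup_mult \<times> 'a \<Rightarrow> complex"
  assumes w1: "\<And>s. 1 \<le> w s" and ws: "\<And>s t. w (s * t) \<le> w s * w t"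
    and M: "(\<lambda>p. norm (m p) * tensor_weight w p) summable_on UNIV"
  shows "(\<lambda>u. norm (bpi m u) * w u) summable_on UNIV"
proof -
  have w0: "\<And>s. 0 \<le> w s" using w1 by (meson order_trans zero_le_one)
  have "(\<lambda>u. norm (infsum m {p. (\<lambda>(x,y). x * y) p = u}) * w u) summable_on UNIV"
  proof (rule fiber_weighted[OF w0])
    show "(\<lambda>b. norm (m b) * w ((\<lambda>(x,y). x * y) b)) summable_on UNIV"
    proof (rule summable_on_comparison_test[OF M])
      fix p :: "'a \<times> 'a"
      show "0 \<le> norm (m p) * w ((\<lambda>(x,y). x * y) p)" using w0 by simp
      show "norm (m p) * w ((\<lambda>(x,y). x * y) p) \<le> norm (m p) * tensor_weight w p"
        using ws[of "fst p" "snd p"] by (cases p) (simp add: tensor_weight_def mult_left_mono)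
    qed
  qed
  then show ?thesis by (simp add: bpi_alt)
qed

lemma G_summable:
  fixes m :: "'a::semigroup_mult \<times> 'a \<Rightarrow> complex"
  assumes w1: "\<And>s. 1 \<le> w s" and ws: "\<And>s t. w (s * t) \<le> w s * w t"
    and M: "(\<lambda>p. norm (m p) * tensor_weight w p) summable_on UNIV"
  shows "(\<lambda>u. norm ((bconv (dl s) (bpi m) - dl s) u) * w u) summable_on UNIV"
proof -
  have w0: "\<And>s. 0 \<le> w s" using w1 by (meson order_trans zero_le_one)
  have P1: "(\<lambda>u. norm (bpi m u) * w u) summable_on UNIV" by (rule bpi_summable[OF w1 ws M])
  have "(\<lambda>u. norm (infsum (bpi m) {t. s * t = u}) * w u) summable_on UNIV"
  proof (rule fiber_weighted[OF w0])
    show "(\<lambda>t. norm (bpi m t) * w (s * t)) summable_on UNIV"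
    proof (rule summable_on_comparison_test[OF summable_on_cmult_right[OF P1, of "w s"]])
      fix t
      show "0 \<le> norm (bpi m t) * w (s * t)" using w0 by simp
      show "norm (bpi m t) * w (s * t) \<le> w s * (norm (bpi m t) * w t)"
        using mult_left_mono[OF ws[of s t], of "norm (bpi m t)"] by (simp add: mult_ac)
    qed
  qed
  then have P2: "(\<lambda>u. norm (bconv (dl s) (bpi m) u) * w u) summable_on UNIV"
    by (simp add: bconv_dl)
  show ?thesis
  proof (rule summable_on_comparison_test[OF summable_on_add[OF P2 dl_weighted[of s w]]])
    fix u
    show "0 \<le> norm ((bconv (dl s) (bpi m) - dl s) u) * w u" using w0 by simp
    show "norm ((bconv (dl s) (bpi m) - dl s) u) * w u \<le>
        norm (bconv (dl s) (bpi m) u) * w u + norm (dl s u) * w u"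
      using mult_right_mono[OF norm_triangle_ineq4[of "bconv (dl s) (bpi m) u" "dl s u"] w0[of u]]
      by (simp add: algebra_simps)
  qed
qed

lemma R_part:
  fixes m :: "'a::semigroup_mult \<times> 'a \<Rightarrow> complex"
  assumes w1: "\<And>s. 1 \<le> w s" and ws: "\<And>s t. w (s * t) \<le> w s * w t"
    and M: "(\<lambda>p. norm (m p) * tensor_weight w p) summable_on UNIV"
    and xyz: "\<And>x y z::'a. x * y * z = x * z" and xyx: "\<And>x y::'a. x * y * x = x"
    and ne: "s2 * s1 \<noteq> s2"
  shows "1 \<le> l1_norm w (bconv (dl s1) (bpi m) - dl s1) + l1_norm w (bconv (dl s2) (bpi m) - dl s2)"
proof -
  have w0: "\<And>s. 0 \<le> w s" using w1 by (meson order_trans zero_le_one)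
  define T where "T = infsum (bpi m) {t. s1 * t = s1}"
  have set_eq: "{t. s2 * t = s2 * s1} = {t. s1 * t = s1}"
  proof safe
    fix t assume "s2 * t = s2 * s1"
    then have "s1 * (s2 * t) = s1 * (s2 * s1)" by simp
    then show "s1 * t = s1" by (metis mult.assoc xyz xyx)
  next
    fix t assume "s1 * t = s1"
    then have "s2 * (s1 * t) = s2 * s1" by simp
    then show "s2 * t = s2 * s1" by (metis mult.assoc xyz)
  qed
  have e1: "(bconv (dl s1) (bpi m) - dl s1) s1 = T - 1"
    by (simp add: bconv_dl T_def) (simp add: dl_def)
  have e2: "(bconv (dl s2) (bpi m) - dl s2) (s2 * s1) = T"
    using ne by (simp add: bconv_dl T_def set_eq) (simp add: dl_def)
  have "norm (T - 1) \<le> norm (T - 1) * w s1"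
    using w1[of s1] by (simp add: mult_le_cancel_left1)
  also have "\<dots> \<le> l1_norm w (bconv (dl s1) (bpi m) - dl s1)"
    using point_le_l1[OF G_summable[OF w1 ws M] w0, of s1 s1] e1 by (simp add: fun_diff_def)
  finally have a: "norm (T - 1) \<le> l1_norm w (bconv (dl s1) (bpi m) - dl s1)" .
  have "norm T \<le> norm T * w (s2 * s1)"
    using w1[of "s2 * s1"] by (simp add: mult_le_cancel_left1)
  also have "\<dots> \<le> l1_norm w (bconv (dl s2) (bpi m) - dl s2)"
    using point_le_l1[OF G_summable[OF w1 ws M] w0, of s2 "s2 * s1"] e2 by (simp add: fun_diff_def)
  finally have b: "norm T \<le> l1_norm w (bconv (dl s2) (bpi m) - dl s2)" .
  have "1 \<le> norm (T - 1) + norm T"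
    using norm_triangle_ineq4[of T "T - 1"] by simp
  then show ?thesis using a b by linarith
qed


lemma blmod_summable:
  fixes m :: "'a::semigroup_mult \<times> 'a \<Rightarrow> complex"
  assumes w1: "\<And>s. 1 \<le> w s" and ws: "\<And>s t. w (s * t) \<le> w s * w t"
    and M: "(\<lambda>p. norm (m p) * tensor_weight w p) summable_on UNIV"
  shows "(\<lambda>p. norm (blmod (dl s) m p) * tensor_weight w p) summable_on UNIV"
proof -
  have w0: "\<And>s. 0 \<le> w s" using w1 by (meson order_trans zero_le_one)
  have tw0: "\<And>p. 0 \<le> tensor_weight w p" using w0 by (simp add: tensor_weight_def split: prod.splits)
  define f where "f = (\<lambda>b::'a\<times>'a. (s * fst b, snd b))"
  have "(\<lambda>c. norm (infsum m {b. f b = c}) * tensor_weight w c) summable_on UNIV"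
  proof (rule fiber_weighted[OF tw0])
    show "(\<lambda>b. norm (m b) * tensor_weight w (f b)) summable_on UNIV"
    proof (rule summable_on_comparison_test[OF summable_on_cmult_right[OF M, of "w s"]])
      fix p :: "'a \<times> 'a"
      show "0 \<le> norm (m p) * tensor_weight w (f p)" using tw0 by simp
      show "norm (m p) * tensor_weight w (f p) \<le> w s * (norm (m p) * tensor_weight w p)"
        using mult_left_mono[OF mult_right_mono[OF ws[of s "fst p"] w0[of "snd p"]], of "norm (m p)"]
        by (cases p) (simp add: f_def tensor_weight_def mult_ac)
    qed
  qed
  moreover have "infsum m {b. f b = c} = blmod (dl s) m c" for c
  proof (cases c)
    case (Pair u v)
    have "{b. f b = (u,v)} = (\<lambda>x. (x,v)) ` {x. s * x = u}" by (auto simp: f_def)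
    then show ?thesis using Pair by (simp add: blmod_dl infsum_reindex inj_on_def o_def)
  qed
  ultimately show ?thesis by simp
qed


lemma L_part:
  fixes m :: "'a::semigroup_mult \<times> 'a \<Rightarrow> complex"
  assumes w1: "\<And>s. 1 \<le> w s" and ws: "\<And>s t. w (s * t) \<le> w s * w t"
    and M: "(\<lambda>p. norm (m p) * tensor_weight w p) summable_on UNIV"
    and lz: "\<And>x y::'a. x * y = x"
    and ne: "s1 \<noteq> s2"
  shows "1 \<le> l1_norm w (bconv (dl s1) (bpi m) - dl s1)
            + l1_norm (tensor_weight w) (blmod (dl s1) m - brmod m (dl s1))
            + l1_norm (tensor_weight w) (blmod (dl s2) m - brmod m (dl s2))"
proof -
  have w0: "\<And>s. 0 \<le> w s" using w1 by (meson order_trans zero_le_one)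
  have tw0: "\<And>p. 0 \<le> tensor_weight w p" using w0 by (simp add: tensor_weight_def split: prod.splits)
  have tw1: "\<And>p. 1 \<le> tensor_weight w p" by (rule tw_ge1[OF w1])
  have msum: "m summable_on UNIV"
  proof (rule abs_summable_summable)
    show "(\<lambda>p. norm (m p)) summable_on UNIV"
    proof (rule summable_on_comparison_test[OF M])
      fix p show "norm (m p) \<le> norm (m p) * tensor_weight w p"
        using tw1[of p] by (simp add: mult_le_cancel_left1)
    qed simp
  qed
  define nu where "nu v = infsum (\<lambda>x. m (x,v)) UNIV" for v
  define D where "D s = blmod (dl s) m - brmod m (dl s)" for s
  have brm: "brmod m (dl s) = m" for s
  proof
    fix p :: "'a \<times> 'a" show "brmod m (dl s) p = m p"
    proof (cases p)
      case (Pair u v)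
      have "{y. y * s = v} = {v}" using lz by auto
      then show ?thesis using Pair by (simp add: brmod_dl)
    qed
  qed
  have Dform: "D s (u,v) = (if u = s then nu v else 0) - m (u,v)" for s u v
  proof -
    have "{x. s * x = u} = (if u = s then UNIV else {})" using lz by auto
    then show ?thesis by (simp add: D_def brm blmod_dl nu_def)
  qed
  have Dsum: "(\<lambda>p. norm (D s p) * tensor_weight w p) summable_on UNIV" for s
  proof (rule summable_on_comparison_test[OF summable_on_add[OF blmod_summable[OF w1 ws M, of s] M]])
    fix p
    show "0 \<le> norm (D s p) * tensor_weight w p" using tw0 by simp
    show "norm (D s p) * tensor_weight w p \<le> norm (blmod (dl s) m p) * tensor_weight w p + norm (m p) * tensor_weight w p"
      using mult_right_mono[OF norm_triangle_ineq4[of "blmod (dl s) m p" "m p"] tw0[of p]]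
      by (simp add: D_def brm algebra_simps)
  qed
  define K where "K s = (\<lambda>v. norm (D s (s1, v)) * tensor_weight w (s1, v))" for s
  have inje: "inj (\<lambda>v::'a. (s1, v))" by (simp add: inj_on_def)
  have Ksum: "K s summable_on UNIV" and Kle: "infsum (K s) UNIV \<le> l1_norm (tensor_weight w) (D s)" for s
    using sub_reindex[OF inje Dsum[of s]] tw0 by (auto simp: K_def l1_norm_def)
  have nuK: "norm (nu v) \<le> K s1 v + K s2 v" for v
  proof -
    have "norm (nu v) \<le> norm (nu v - m (s1, v)) + norm (m (s1, v))"
      using norm_triangle_ineq4[of "nu v - m (s1, v)" "- m (s1, v)"] by simp
    also have "\<dots> \<le> norm (nu v - m (s1, v)) * tensor_weight w (s1, v) + norm (m (s1, v)) * tensor_weight w (s1, v)"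
      using tw1[of "(s1, v)"] by (intro add_mono) (simp_all add: mult_le_cancel_left1)
    also have "\<dots> = K s1 v + K s2 v" using ne by (simp add: K_def Dform)
    finally show ?thesis .
  qed
  have nusum: "(\<lambda>v. norm (nu v)) summable_on UNIV"
    by (rule summable_on_comparison_test[OF summable_on_add[OF Ksum Ksum]]) (use nuK in auto)
  have fib: "infsum m {b. snd b = v} = nu v" for v
  proof -
    have "{b. snd b = v} = range (\<lambda>x::'a. (x, v))" by auto
    then have "infsum m {b. snd b = v} = infsum m (range (\<lambda>x::'a. (x, v)))" by (simp only:)
    also have "\<dots> = nu v" by (simp add: nu_def infsum_reindex inj_on_def o_def)
    finally show ?thesis .
  qed
  define \<sigma> where "\<sigma> = infsum m UNIV"
  have sig_nu: "\<sigma> = infsum nu UNIV"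
    using fiber_sum(2)[OF msum, of snd] by (simp add: fib \<sigma>_def)
  have "norm \<sigma> \<le> infsum (\<lambda>v. norm (nu v)) UNIV"
    unfolding sig_nu by (rule norm_infsum_bound) (use nusum in simp)
  also have "\<dots> \<le> infsum (\<lambda>v. K s1 v + K s2 v) UNIV"
    by (rule infsum_mono[OF nusum summable_on_add[OF Ksum Ksum]]) (use nuK in auto)
  also have "\<dots> = infsum (K s1) UNIV + infsum (K s2) UNIV"
    by (rule infsum_add[OF Ksum Ksum])
  also have "\<dots> \<le> l1_norm (tensor_weight w) (D s1) + l1_norm (tensor_weight w) (D s2)"
    using Kle[of s1] Kle[of s2] by simp
  finally have A: "norm \<sigma> \<le> l1_norm (tensor_weight w) (D s1) + l1_norm (tensor_weight w) (D s2)" .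
  have "bconv (dl s1) (bpi m) s1 = infsum (bpi m) UNIV"
    using lz by (simp add: bconv_dl)
  also have "\<dots> = \<sigma>"
    using fiber_sum(2)[OF msum, of "\<lambda>(x,y). x * y"] by (simp add: \<sigma>_def bpi_alt[abs_def])
  finally have e1: "(bconv (dl s1) (bpi m) - dl s1) s1 = \<sigma> - 1" by (simp add: dl_def)
  have "norm (\<sigma> - 1) \<le> norm (\<sigma> - 1) * w s1"
    using w1[of s1] by (simp add: mult_le_cancel_left1)
  also have "\<dots> \<le> l1_norm w (bconv (dl s1) (bpi m) - dl s1)"
    using point_le_l1[OF G_summable[OF w1 ws M] w0, of s1 s1] e1 by (simp add: fun_diff_def)
  finally have B: "norm (\<sigma> - 1) \<le> l1_norm w (bconv (dl s1) (bpi m) - dl s1)" .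
  have "1 \<le> norm (\<sigma> - 1) + norm \<sigma>"
    using norm_triangle_ineq4[of \<sigma> "\<sigma> - 1"] by simp
  then show ?thesis using A B unfolding D_def by linarith
qed


lemma dl_l1: "dl s \<in> l1_space w"
  unfolding l1_space_def using dl_weighted by simp

theorem theorem2p7:
  fixes w :: "'a::semigroup_mult \<Rightarrow> real"
  assumes "rectangular_band TYPE('a)"
    and "is_weight w"
    and "separable_weight w"
  shows "pseudo_amenable_beurling w \<longleftrightarrow> (\<exists>x::'a. UNIV = {x})"
proof -
  obtain L R :: "'a set" and phi :: "'a \<Rightarrow> 'a \<times> 'a" and wL wR :: "'a \<Rightarrow> real" where bij: "bij_betw phi UNIV (L \<times> R)"
    and phm: "\<forall>s t. phi (s * t) = (fst (phi s), snd (phi t))"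
    and wLp: "\<forall>l\<in>L. 0 < wL l" and wLs: "\<forall>l\<in>L. \<forall>m\<in>L. wL l \<le> wL l * wL m"
    and wRp: "\<forall>r\<in>R. 0 < wR r" and wRs: "\<forall>r\<in>R. \<forall>q\<in>R. wR q \<le> wR r * wR q"
    and wdef: "\<forall>s. w s = wL (fst (phi s)) * wR (snd (phi s))"
    using assms(3) unfolding separable_weight_def by blast
  have w1: "1 \<le> w s" for s
  proof -
    have mem: "phi s \<in> L \<times> R" using bij_betw_apply[OF bij] by simp
    then have "fst (phi s) \<in> L" "snd (phi s) \<in> R" by auto
    then have "1 \<le> wL (fst (phi s))" "1 \<le> wR (snd (phi s))"
      using wLp wLs wRp wRs by (metis mult_le_cancel_left1)+
    then show ?thesis using wdef by (metis mult_mono' mult_1 zero_le_one)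
  qed
  have ws: "w (s * t) \<le> w s * w t" for s t using assms(2) unfolding is_weight_def by blast
  have injphi: "inj phi" using bij bij_betw_imp_inj_on by blast
  have xyz: "x * y * z = x * z" for x y z :: 'a
    by (rule injD[OF injphi]) (simp add: phm)
  have xyx: "x * y * x = x" for x y :: 'a
    using assms(1) unfolding rectangular_band_def by blast
  show ?thesis
  proof
    assume "pseudo_amenable_beurling w"
    then obtain F :: "('a \<times> 'a \<Rightarrow> complex) filter" where AD: "approx_diagonal w F (\<lambda>m. m)"
      unfolding pseudo_amenable_beurling_def by blast
    have Fnb: "F \<noteq> bot" using AD unfolding approx_diagonal_def by blast
    have evM: "\<forall>\<^sub>F m in F. (\<lambda>p. norm (m p) * tensor_weight w p) summable_on UNIV"
      using AD unfolding approx_diagonal_def l1_space_def by simp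
    have T1: "((\<lambda>m. l1_norm (tensor_weight w) (blmod (dl s) m - brmod m (dl s))) \<longlongrightarrow> 0) F" for s
      using AD dl_l1[of s w] unfolding approx_diagonal_def by blast
    have T2: "((\<lambda>m. l1_norm w (bconv (dl s) (bpi m) - dl s)) \<longlongrightarrow> 0) F" for s
      using AD dl_l1[of s w] unfolding approx_diagonal_def by blast
    have E1: "\<forall>\<^sub>F m in F. l1_norm (tensor_weight w) (blmod (dl s) m - brmod m (dl s)) < 1/3" for s
      by (rule order_tendstoD(2)[OF T1]) simp
    have E2: "\<forall>\<^sub>F m in F. l1_norm w (bconv (dl s) (bpi m) - dl s) < 1/3" for s
      by (rule order_tendstoD(2)[OF T2]) simp
    have lz: "s2 * s1 = s2" for s1 s2 :: 'a
    proof (rule ccontr)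
      assume ne: "s2 * s1 \<noteq> s2"
      have "\<forall>\<^sub>F m in F. False"
        using eventually_conj[OF evM eventually_conj[OF E2[of s1] E2[of s2]]]
      proof (rule eventually_mono)
        fix m assume h: "(\<lambda>p. norm (m p) * tensor_weight w p) summable_on UNIV \<and>
          l1_norm w (bconv (dl s1) (bpi m) - dl s1) < 1/3 \<and> l1_norm w (bconv (dl s2) (bpi m) - dl s2) < 1/3"
        then show False using R_part[OF w1 ws _ xyz xyx ne, of m] by linarith
      qed
      then show False using Fnb by (simp add: eventually_False)
    qed
    have eq: "s1 = s2" for s1 s2 :: 'a
    proof (rule ccontr)
      assume ne: "s1 \<noteq> s2"
      have "\<forall>\<^sub>F m in F. False"
        using eventually_conj[OF evM eventually_conj[OF E2[of s1] eventually_conj[OF E1[of s1] E1[of s2]]]]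
      proof (rule eventually_mono)
        fix m assume h: "(\<lambda>p. norm (m p) * tensor_weight w p) summable_on UNIV \<and>
          l1_norm w (bconv (dl s1) (bpi m) - dl s1) < 1/3 \<and>
          l1_norm (tensor_weight w) (blmod (dl s1) m - brmod m (dl s1)) < 1/3 \<and>
          l1_norm (tensor_weight w) (blmod (dl s2) m - brmod m (dl s2)) < 1/3"
        then show False using L_part[OF w1 ws _ lz ne, of m] by linarith
      qed
      then show False using Fnb by (simp add: eventually_False)
    qed
    show "\<exists>x::'a. UNIV = {x}" using eq by blast
  next
    assume "\<exists>x::'a. UNIV = {x}"
    then obtain x :: 'a where "UNIV = {x}" by blast
    then have all: "z = x" for z :: 'a by blast
    define m0 where "m0 = (\<lambda>p::'a \<times> 'a. 1::complex)"
    have S1: "{(s,t). s * t = u} = {(x,x)}" for u :: 'a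
    proof -
      have "x * x = u" using all[of "x * x"] all[of u] by simp
      then show ?thesis using all by auto
    qed
    have bl: "blmod a m0 - brmod m0 a = (\<lambda>_. 0)" for a
      by (rule ext) (auto simp: blmod_def brmod_def S1 m0_def)
    have bp: "bconv a (bpi m0) - a = (\<lambda>_. 0)" for a
    proof (rule ext)
      fix u :: 'a
      have "bpi m0 = (\<lambda>_. 1)" by (rule ext) (simp add: bpi_def S1 m0_def)
      then show "(bconv a (bpi m0) - a) u = 0"
        by (simp add: bconv_def S1) (metis all)
    qed
    have fin: "finite (UNIV :: ('a \<times> 'a) set)"
    proof -
      have "(UNIV :: ('a \<times> 'a) set) = {(x,x)}" by (auto intro: all)
      then show ?thesis by (metis finite.emptyI finite_insert)
    qed
    have bl': "blmod a m0 p - brmod m0 a p = 0" for a p using fun_cong[OF bl[of a], of p] by simp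
    have bp': "bconv a (bpi m0) u - a u = 0" for a u using fun_cong[OF bp[of a], of u] by simp
    have "approx_diagonal w (principal {m0}) (\<lambda>m. m)"
      unfolding approx_diagonal_def
    proof (intro conjI ballI)
      show "principal {m0} \<noteq> bot" by (simp add: principal_eq_bot_iff)
      show "\<forall>\<^sub>F i in principal {m0}. i \<in> l1_space (tensor_weight w)"
        by (simp add: eventually_principal l1_space_def fin)
    next
      fix a assume "a \<in> l1_space w"
      show "((\<lambda>i. l1_norm (tensor_weight w) (blmod a i - brmod i a)) \<longlongrightarrow> 0) (principal {m0})"
        by (rule tendsto_eventually) (simp add: eventually_principal bl' l1_norm_def)
      show "((\<lambda>i. l1_norm w (bconv a (bpi i) - a)) \<longlongrightarrow> 0) (principal {m0})"
        by (rule tendsto_eventually) (simp add: eventually_principal bp' l1_norm_def)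
    qed
    then show "pseudo_amenable_beurling w" unfolding pseudo_amenable_beurling_def by blast
  qed
qed

end
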